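(* Let $P\subset\mathbb R_+^n$ be a nonempty $n$-dimensional polyhedron with $P+\mathbb R_+^n\subset P$, $\Sigma$ a simplicial subdivision of the fan $\Sigma_0$ associated with $P$, $\sigma\in\Sigma^{(n)}$ with skeleton $a^1(\sigma),\dots,a^n(\sigma)$, $I\subset\{1,\dots,n\}$, and $\gamma=\gamma(I,\sigma)$ (assumed nonempty). Then the following are equivalent: (i) $\gamma$ is compact; (ii) $\sum_{j\in I}a^j_k(\sigma)>0$ for every $k=1,\dots,n$; (iii) $V(\gamma)=\emptyset$; (iv) $\pi(\sigma)(T_I(\mathbb R^n))=\{0\}$; (v) $\pi(\sigma)(T_I^*(\mathbb R^n))=\{0\}$.
   Context: $H(a,l)=\{x:\langle a,x\rangle=l\}$, $H^+(a,l)=\{x:\langle a,x\rangle\ge l\}$; polyhedron: finite intersection of $H^+(a,l)$ with $(a,l)\in\mathbb Z^n\times\mathbb Z$; faces are $P\cap H(a,l)$ with $P\subset H^+(a,l)$. $l(a)=\min\{\langle a,\alpha\rangle:\alpha\in P\}$. For each face $\gamma$, $\gamma^*=\{a\in\mathbb R_+^n:H(a,l(a))\cap P=\gamma\}$; closures of the $\gamma^*$ form the fan $\Sigma_0$. A simplicial subdivision $\Sigma$: fan with support $\mathbb R_+^n$, each cone inside a cone of $\Sigma_0$, each cone's skeleton (primitive integer edge vectors) completable to a basis of $\mathbb Z^n$; $\Sigma^{(n)}$ its $n$-dimensional cones. $\gamma(I,\sigma)=\bigcap_{j\in I}H(a^j(\sigma),l(a^j(\sigma)))\cap P$, with $\gamma(\emptyset,\sigma)=P$.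 $V(\gamma)=\{k:\gamma+\mathbb R_+e_k\subset\gamma\}$ ($e_k$ standard basis vector). $\pi(\sigma)(y)=x$ with $x_k=\prod_jy_j^{a^j_k(\sigma)}$. $T_I(\mathbb R^n)=\{y:y_j=0\text{ for }j\in I\}$, $T_I^*(\mathbb R^n)=\{y:y_j=0\iff j\in I\}$. *)

theory Defs
  imports "HOL-Analysis.Analysis"
begin

definition rplus :: "(real^'n) set" where
  "rplus = {x. \<forall>i. 0 \<le> x$i}"

definition int_vec :: "real^'n \<Rightarrow> bool" where
  "int_vec a \<longleftrightarrow> (\<forall>i. a$i \<in> \<int>)"

definition hyp :: "real^'n \<Rightarrow> real \<Rightarrow> (real^'n) set" where
  "hyp a l = {x. inner a x = l}"

definition hsp :: "real^'n \<Rightarrow> real \<Rightarrow> (real^'n) set" where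
  "hsp a l = {x. inner a x \<ge> l}"

definition polyhedron :: "(real^'n) set \<Rightarrow> bool" where
  "polyhedron P \<longleftrightarrow> (\<exists>S. finite S \<and> (\<forall>(a,l)\<in>S. int_vec a \<and> l \<in> \<int>) \<and>
      P = (\<Inter>(a,l)\<in>S. hsp a l))"

definition face_of_poly :: "(real^'n) set \<Rightarrow> (real^'n) set \<Rightarrow> bool" where
  "face_of_poly P \<gamma> \<longleftrightarrow> (\<exists>a l. P \<subseteq> hsp a l \<and> \<gamma> = P \<inter> hyp a l)"

definition lmin :: "(real^'n) set \<Rightarrow> real^'n \<Rightarrow> real" where
  "lmin P a = Inf ((\<lambda>\<alpha>. inner a \<alpha>) ` P)"

definition dual_cone :: "(real^'n) set \<Rightarrow> (real^'n) set \<Rightarrow> (real^'n) set" where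
  "dual_cone P \<gamma> = {a \<in> rplus. hyp a (lmin P a) \<inter> P = \<gamma>}"

definition fan0 :: "(real^'n) set \<Rightarrow> (real^'n) set set" where
  "fan0 P = {closure (dual_cone P \<gamma>) | \<gamma>. face_of_poly P \<gamma>}"

definition cone_gen :: "(real^'n) set \<Rightarrow> (real^'n) set" where
  "cone_gen V = {\<Sum>v\<in>V. c v *\<^sub>R v | c. \<forall>v\<in>V. 0 \<le> c v}"

definition zbasis :: "(real^'n) set \<Rightarrow> bool" where
  "zbasis B \<longleftrightarrow> finite B \<and> (\<forall>b\<in>B. int_vec b) \<and> independent B \<and>
     (\<forall>x. int_vec x \<longrightarrow> (\<exists>c. (\<forall>b\<in>B. c b \<in> \<int>) \<and> x = (\<Sum>b\<in>B. c b *\<^sub>R b)))"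

definition primitive :: "real^'n \<Rightarrow> bool" where
  "primitive v \<longleftrightarrow> int_vec v \<and> v \<noteq> 0 \<and>
     (\<forall>(m::int) w. int_vec w \<and> v = of_int m *\<^sub>R w \<longrightarrow> \<bar>m\<bar> = 1)"

definition simplicial_subdivision :: "(real^'n) set \<Rightarrow> (real^'n) set set \<Rightarrow> bool" where
  "simplicial_subdivision P \<Sigma> \<longleftrightarrow>
     finite \<Sigma> \<and>
     (\<forall>\<sigma>\<in>\<Sigma>. \<exists>V. finite V \<and> \<sigma> = cone_gen V \<and> (\<forall>v\<in>V. primitive v) \<and>
                   (\<exists>B. V \<subseteq> B \<and> zbasis B)) \<and>
     (\<forall>\<sigma>\<in>\<Sigma>. \<forall>\<tau>. face_of_poly \<sigma> \<tau> \<and> \<tau> \<noteq> {} \<longrightarrow> \<tau> \<in> \<Sigma>) \<and>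
     (\<forall>\<sigma>\<in>\<Sigma>. \<forall>\<tau>\<in>\<Sigma>. face_of_poly \<sigma> (\<sigma> \<inter> \<tau>) \<and> face_of_poly \<tau> (\<sigma> \<inter> \<tau>)) \<and>
     \<Union>\<Sigma> = rplus \<and>
     (\<forall>\<sigma>\<in>\<Sigma>. \<exists>C\<in>fan0 P. \<sigma> \<subseteq> C)"

definition top_cones :: "(real^'n) set set \<Rightarrow> (real^'n) set set" where
  "top_cones \<Sigma> = {\<sigma>\<in>\<Sigma>. aff_dim \<sigma> = int CARD('n)}"

definition gamma_face :: "(real^'n) set \<Rightarrow> ('n \<Rightarrow> real^'n) \<Rightarrow> 'n set \<Rightarrow> (real^'n) set" where
  "gamma_face P a I = (\<Inter>j\<in>I. hyp (a j) (lmin P (a j))) \<inter> P"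

definition Vset :: "(real^'n) set \<Rightarrow> 'n set" where
  "Vset \<gamma> = {k. \<forall>x\<in>\<gamma>. \<forall>t::real. 0 \<le> t \<longrightarrow> x + t *\<^sub>R axis k 1 \<in> \<gamma>}"

text \<open>The monomial map \<pi>(\<sigma>); the exponents a^j_k are nonnegative integers.\<close>
definition pi_map :: "('n \<Rightarrow> real^'n) \<Rightarrow> real^'n \<Rightarrow> real^'n" where
  "pi_map a y = (\<chi> k. \<Prod>j\<in>UNIV. (y$j) ^ nat \<lfloor>a j $ k\<rfloor>)"

definition T_I :: "'n set \<Rightarrow> (real^'n) set" where
  "T_I I = {y. \<forall>j\<in>I. y$j = 0}"

definition T_I_star :: "'n set \<Rightarrow> (real^'n) set" where
  "T_I_star I = {y. \<forall>j. y$j = 0 \<longleftrightarrow> j \<in> I}"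

end

theory Submission
  imports Defs
begin

lemma closed_poly: "polyhedron P \<Longrightarrow> closed P"
  unfolding polyhedron_def hsp_def
  by (auto intro!: closed_INT simp: closed_halfspace_ge split: prod.splits)

theorem proposition8p6:
  fixes P :: "(real^'n) set" and \<Sigma> :: "(real^'n) set set" and \<sigma> :: "(real^'n) set"
    and a :: "'n \<Rightarrow> real^'n" and I :: "'n set"
  assumes "polyhedron P" and "P \<noteq> {}" and "P \<subseteq> rplus"
    and "aff_dim P = int CARD('n)"
    and "\<forall>x\<in>P. \<forall>y\<in>rplus. x + y \<in> P"
    and "simplicial_subdivision P \<Sigma>"
    and "\<sigma> \<in> top_cones \<Sigma>"
    and "inj a" and "\<forall>j. primitive (a j)" and "\<sigma> = cone_gen (range a)"
    and "gamma_face P a I \<noteq> {}"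
  shows "(compact (gamma_face P a I) \<longleftrightarrow> (\<forall>k. (\<Sum>j\<in>I. a j $ k) > 0)) \<and>
         ((\<forall>k. (\<Sum>j\<in>I. a j $ k) > 0) \<longleftrightarrow> Vset (gamma_face P a I) = {}) \<and>
         (Vset (gamma_face P a I) = {} \<longleftrightarrow> pi_map a ` T_I I = {0}) \<and>
         (pi_map a ` T_I I = {0} \<longleftrightarrow> pi_map a ` T_I_star I = {0})"
proof -
  define \<gamma> where "\<gamma> = gamma_face P a I"
  define s where "s k = (\<Sum>j\<in>I. a j $ k)" for k
  have aint: "a j $ k \<in> \<int>" for j k
    using assms(9) unfolding primitive_def int_vec_def by auto
  have ain\<sigma>: "a j \<in> \<sigma>" for j
  proof -
    have "a j = (\<Sum>v\<in>range a. (if v = a j then 1 else 0) *\<^sub>R v)"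
      by (simp add: if_distrib[of "\<lambda>c. c *\<^sub>R _"] cong: if_cong)
    then show ?thesis unfolding assms(10) cone_gen_def by force
  qed
  have "\<sigma> \<in> \<Sigma>" using assms(7) unfolding top_cones_def by auto
  then have "\<sigma> \<subseteq> rplus" using assms(6) unfolding simplicial_subdivision_def by auto
  then have anonneg: "0 \<le> a j $ k" for j k using ain\<sigma>[of j] unfolding rplus_def by auto
  have sC: "s k > 0 \<longleftrightarrow> (\<exists>j\<in>I. a j $ k > 0)" for k
  proof
    assume "s k > 0"
    show "\<exists>j\<in>I. a j $ k > 0"
    proof (rule ccontr)
      assume "\<not> (\<exists>j\<in>I. a j $ k > 0)"
      then have "\<forall>j\<in>I. a j $ k = 0" using anonneg by (metis antisym not_less)
      then have "s k = 0" unfolding s_def by simp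
      then show False using \<open>s k > 0\<close> by simp
    qed
  next
    assume "\<exists>j\<in>I. a j $ k > 0"
    then show "s k > 0" unfolding s_def
      by (meson anonneg finite sum_pos2)
  qed
  have expo: "nat \<lfloor>a j $ k\<rfloor> > 0 \<longleftrightarrow> a j $ k > 0" for j k
  proof -
    obtain m where m: "a j $ k = of_int m" using aint[of j k] Ints_cases by blast
    then show ?thesis by simp
  qed
  have piT: "pi_map a ` T_I I = {0} \<longleftrightarrow> (\<forall>k. s k > 0)"
   and piTs: "pi_map a ` T_I_star I = {0} \<longleftrightarrow> (\<forall>k. s k > 0)"
  proof -
    define y0 :: "real^'n" where "y0 = (\<chi> j. if j \<in> I then 0 else 1)"
    have y0T: "y0 \<in> T_I I" "y0 \<in> T_I_star I" unfolding y0_def T_I_def T_I_star_def by auto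
    have sub: "T_I_star I \<subseteq> T_I I" unfolding T_I_def T_I_star_def by auto
    have fw: "pi_map a ` T_I I = {0}" if "\<forall>k. s k > 0"
    proof -
      have "pi_map a y = 0" if y: "y \<in> T_I I" for y
      proof -
        have "pi_map a y $ k = 0" for k
        proof -
          obtain j where j: "j \<in> I" "a j $ k > 0" using sC \<open>\<forall>k. s k > 0\<close> by blast
          have "y $ j = 0" using y j unfolding T_I_def by auto
          then have "(y$j) ^ nat \<lfloor>a j $ k\<rfloor> = 0" using expo[of j k] j by simp
          then show ?thesis unfolding pi_map_def by (auto intro: prod_zero)
        qed
        then show ?thesis by (simp add: vec_eq_iff)
      qed
      note * = this
      show ?thesis
      proof
        show "pi_map a ` T_I I \<subseteq> {0}" using * by auto
        show "{0} \<subseteq> pi_map a ` T_I I" using *[OF y0T(1)] y0T(1) by (auto intro: rev_image_eqI)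
      qed
    qed
    have bw: "\<forall>k. s k > 0" if "pi_map a y0 = 0"
    proof (rule ccontr)
      assume "\<not> (\<forall>k. s k > 0)"
      then obtain k where k: "\<forall>j\<in>I. \<not> a j $ k > 0" using sC by blast
      have "\<forall>j. (y0$j) ^ nat \<lfloor>a j $ k\<rfloor> = 1"
      proof
        fix j
        show "(y0$j) ^ nat \<lfloor>a j $ k\<rfloor> = 1"
        proof (cases "j \<in> I")
          case True
          then have "nat \<lfloor>a j $ k\<rfloor> = 0" using k expo[of j k] by auto
          then show ?thesis by simp
        qed (simp add: y0_def)
      qed
      then have "pi_map a y0 $ k = 1" unfolding pi_map_def by simp
      then show False using that by simp
    qed
    show "pi_map a ` T_I I = {0} \<longleftrightarrow> (\<forall>k. s k > 0)"
    proof
      assume "pi_map a ` T_I I = {0}"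
      then have "pi_map a y0 = 0" using y0T(1) by (metis imageI singletonD)
      then show "\<forall>k. s k > 0" by (rule bw)
    qed (rule fw)
    show "pi_map a ` T_I_star I = {0} \<longleftrightarrow> (\<forall>k. s k > 0)"
    proof
      assume "pi_map a ` T_I_star I = {0}"
      then have "pi_map a y0 = 0" using y0T(2) by (metis imageI singletonD)
      then show "\<forall>k. s k > 0" by (rule bw)
    next
      assume "\<forall>k. s k > 0"
      then have "pi_map a ` T_I I = {0}" by (rule fw)
      then have "pi_map a ` T_I_star I \<subseteq> {0}" using sub by blast
      moreover have "pi_map a ` T_I_star I \<noteq> {}" using y0T(2) by blast
      ultimately show "pi_map a ` T_I_star I = {0}" by (meson subset_singleton_iff)
    qed
  qed
  have gmem: "x \<in> \<gamma> \<longleftrightarrow> x \<in> P \<and> (\<forall>j\<in>I. inner (a j) x = lmin P (a j))" for x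
    unfolding \<gamma>_def gamma_face_def hyp_def by auto
  have V: "Vset \<gamma> = {} \<longleftrightarrow> (\<forall>k. s k > 0)"
  proof
    assume V0: "Vset \<gamma> = {}"
    show "\<forall>k. s k > 0"
    proof (rule ccontr)
      assume "\<not> (\<forall>k. s k > 0)"
      then obtain k where "\<not> (\<exists>j\<in>I. a j $ k > 0)" using sC by blast
      then have k: "\<forall>j\<in>I. a j $ k = 0" using anonneg by (metis antisym not_less)
      have "k \<in> Vset \<gamma>" unfolding Vset_def
      proof (intro CollectI ballI allI impI)
        fix x and t :: real assume x: "x \<in> \<gamma>" and t: "0 \<le> t"
        have "t *\<^sub>R axis k 1 \<in> rplus" using t unfolding rplus_def by (simp add: axis_def)
        then have "x + t *\<^sub>R axis k 1 \<in> P" using assms(5) x gmem by auto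
        moreover have "inner (a j) (x + t *\<^sub>R axis k 1) = inner (a j) x" if "j \<in> I" for j
          using k that by (simp add: inner_add_right inner_axis)
        ultimately show "x + t *\<^sub>R axis k 1 \<in> \<gamma>" using x gmem by auto
      qed
      then show False using V0 by auto
    qed
  next
    assume S: "\<forall>k. s k > 0"
    show "Vset \<gamma> = {}"
    proof (rule ccontr)
      assume "Vset \<gamma> \<noteq> {}"
      then obtain k where k: "k \<in> Vset \<gamma>" by auto
      obtain x where x: "x \<in> \<gamma>" using assms(11) \<gamma>_def by auto
      have kk: "\<forall>t\<ge>0. x + t *\<^sub>R axis k 1 \<in> \<gamma>" using k x unfolding Vset_def by auto
      have x1: "x + 1 *\<^sub>R axis k 1 \<in> \<gamma>" using kk zero_le_one by blast
      have "a j $ k = 0" if "j \<in> I" for j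
      proof -
        have "inner (a j) (x + 1 *\<^sub>R axis k 1) = inner (a j) x"
          using gmem x x1 that by auto
        then show ?thesis by (simp add: inner_add_right inner_axis)
      qed
      then have "s k = 0" unfolding s_def by simp
      then show False using S[rule_format, of k] by simp
    qed
  qed
  have C: "compact \<gamma> \<longleftrightarrow> (\<forall>k. s k > 0)"
  proof
    assume cp: "compact \<gamma>"
    show "\<forall>k. s k > 0"
    proof (rule ccontr)
      assume "\<not> (\<forall>k. s k > 0)"
      then have "Vset \<gamma> \<noteq> {}" using V by auto
      then obtain k where k: "k \<in> Vset \<gamma>" by auto
      obtain x where x: "x \<in> \<gamma>" using assms(11) \<gamma>_def by auto
      obtain B where B: "\<forall>z\<in>\<gamma>. norm z \<le> B" using cp compact_imp_bounded bounded_iff by metis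
      define t where "t = \<bar>B\<bar> + norm x + 1"
      have kk: "\<forall>t\<ge>0. x + t *\<^sub>R axis k 1 \<in> \<gamma>" using k x unfolding Vset_def by auto
      have "t \<ge> 0" unfolding t_def by simp
      then have "x + t *\<^sub>R axis k 1 \<in> \<gamma>" using kk by blast
      then have "norm (x + t *\<^sub>R axis k 1) \<le> B" using B by auto
      moreover have "norm (t *\<^sub>R (axis k (1::real) :: real^'n)) = t" using \<open>t \<ge> 0\<close> by simp
      moreover have "norm (t *\<^sub>R (axis k (1::real) :: real^'n)) \<le> norm (x + t *\<^sub>R axis k 1) + norm x"
        using norm_triangle_ineq4[of "x + t *\<^sub>R axis k 1" x] by simp
      ultimately show False using t_def abs_ge_self[of B] by linarith
    qed
  next
    assume S: "\<forall>k. s k > 0"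
    have cl: "closed \<gamma>" unfolding \<gamma>_def gamma_face_def hyp_def
      by (intro closed_Int closed_INT closed_poly assms(1) ballI closed_hyperplane)
    define L where "L = (\<Sum>j\<in>I. lmin P (a j))"
    have "\<gamma> \<subseteq> cbox 0 (\<chi> k. L / s k)"
    proof
      fix x assume x: "x \<in> \<gamma>"
      have xn: "0 \<le> x $ k" for k using x gmem assms(3) unfolding rplus_def by auto
      have "L = (\<Sum>j\<in>I. inner (a j) x)" unfolding L_def using x gmem by auto
      also have "\<dots> = (\<Sum>j\<in>I. \<Sum>k\<in>UNIV. a j $ k * x $ k)" by (simp add: inner_vec_def)
      also have "\<dots> = (\<Sum>k\<in>UNIV. s k * x $ k)" unfolding s_def
        by (subst sum.swap) (simp add: sum_distrib_right)
      finally have Leq: "L = (\<Sum>k\<in>UNIV. s k * x $ k)" .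
      have "x $ k \<le> L / s k" for k
      proof -
        have "s k * x $ k \<le> (\<Sum>k\<in>UNIV. s k * x $ k)"
          by (rule member_le_sum) (use S xn in \<open>auto intro: mult_nonneg_nonneg less_imp_le\<close>)
        then show ?thesis using S[rule_format, of k] Leq
          by (simp add: pos_le_divide_eq mult.commute)
      qed
      then show "x \<in> cbox 0 (\<chi> k. L / s k)" using xn by (simp add: mem_box_cart)
    qed
    then have "bounded \<gamma>" using bounded_cbox bounded_subset by blast
    then show "compact \<gamma>" using cl compact_eq_bounded_closed by blast
  qed
  show ?thesis using C V piT piTs unfolding \<gamma>_def s_def by blast
qed

end
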